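(* Let $n\ge2$ and let $v_A=(a_1,\dots,a_n)$ be the vector associated to a positive integral diamond $A$ of Dynkin type $\mathbb{A}_n$ with $a_n=1$, such that $(T_1(v_A),\dots,T_n(v_A))$ defines a Dyck path in $\mathfrak{D}_{2(n+1)}$. Then for each $1\le i<n$, the vector $(T_1(v_{A+i}),\dots,T_n(v_{A+i}))$ also defines a Dyck path in $\mathfrak{D}_{2(n+1)}$, where $v_{A+i}=(a_1,\dots,a_i,\,a_i+a_{i+1},\,a_{i+1},\dots,a_{n-1})$.
   Context: An $\mathbb{A}_n$-diamond over an integral domain $\mathbf{R}$ is a family $A=(a_{i,j})$ of elements of $\mathbf{R}$, with $a_{1,j}$ for $1\le j\le n+1$ and $a_{2,j}$ for $0\le j\le n$, such that (D1) $a_{2,0}=a_{1,n+1}=1$ and (D2) $a_{1,j}a_{2,j}-a_{2,j-1}a_{1,j+1}=1$ for $1\le j\le n$. For $\mathbf{R}=\mathbb{Z}$, $A$ is a positive integral diamond of Dynkin type $\mathbb{A}_n$ if it also satisfies (D3): there are integers $a,m_a$ with $1\le a\le\lfloor (n+2)/2\rfloor$ such that either $(a_{1,1},a_{2,1})=(a,a+m_a)$ or $(a_{1,1},a_{2,1})=(a+m_a,a)$, and $a_{1,2}=a^2+am_a-1$, where $1\le m_1\le n$ when $a=1$ and $0\le m_a\le n+2(1-a)$ when $a>1$. The vector associated to $A$ is $v_A=(a_{1,1},\dots,a_{1,n})$. A Dyck path of length $2N$ is a word in $U,D$ with $N$ of each letter such that every prefix has at least as many $U$'s as $D$'s; $\mathfrak{D}_{2N}$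 is their set. For $G\in\mathfrak{D}_{2(n+1)}$ let $m_i$ be the number of $U$'s before the $i$-th $D$ and $v_G=(m_1,m_2-1,\dots,m_n-n+1)$; a vector $w\in\mathbb{Z}^n$ defines a Dyck path in $\mathfrak{D}_{2(n+1)}$ if $w=v_G$ for some $G\in\mathfrak{D}_{2(n+1)}$. For $u=(u_1,\dots,u_m)\in\mathbb{N}^m$ and $1\le i\le m$: put $r_0=u_i$; while some $l\in\{1,\dots,i\}$ has $r_k-u_l>0$, let $l_k$ be the largest such $l$ and $r_{k+1}=r_k-u_{l_k}$; if this stops at $r_t$ after $t\ge0$ steps, $T_i(u)=r_t+t$. *)

theory Defs
  imports Main "HOL-Library.While_Combinator"
begin

text \<open>An A_n-diamond over the integers: a1 j stands for a_{1,j} (1 \<le> j \<le> n+1),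
  a2 j stands for a_{2,j} (0 \<le> j \<le> n); values at other indices are irrelevant.\<close>

definition is_diamond :: "nat \<Rightarrow> (nat \<Rightarrow> int) \<Rightarrow> (nat \<Rightarrow> int) \<Rightarrow> bool" where
  "is_diamond n a1 a2 \<longleftrightarrow>
     a2 0 = 1 \<and> a1 (n + 1) = 1 \<and>
     (\<forall>j\<in>{1..n}. a1 j * a2 j - a2 (j - 1) * a1 (j + 1) = 1)"

definition D3 :: "nat \<Rightarrow> (nat \<Rightarrow> int) \<Rightarrow> (nat \<Rightarrow> int) \<Rightarrow> bool" where
  "D3 n a1 a2 \<longleftrightarrow>
     (\<exists>a m :: int. 1 \<le> a \<and> a \<le> int ((n + 2) div 2) \<and>
        ((a1 1, a2 1) = (a, a + m) \<or> (a1 1, a2 1) = (a + m, a)) \<and>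
        a1 2 = a ^ 2 + a * m - 1 \<and>
        (a = 1 \<longrightarrow> 1 \<le> m \<and> m \<le> int n) \<and>
        (a > 1 \<longrightarrow> 0 \<le> m \<and> m \<le> int n + 2 * (1 - a)))"

definition pos_int_diamond :: "nat \<Rightarrow> (nat \<Rightarrow> int) \<Rightarrow> (nat \<Rightarrow> int) \<Rightarrow> bool" where
  "pos_int_diamond n a1 a2 \<longleftrightarrow> is_diamond n a1 a2 \<and> D3 n a1 a2"

definition diamond_vec :: "nat \<Rightarrow> (nat \<Rightarrow> int) \<Rightarrow> int list" where
  "diamond_vec n a1 = map a1 [1..<n + 1]"

definition vec_plus :: "int list \<Rightarrow> nat \<Rightarrow> int list" where
  "vec_plus v i = take i v @ [v ! (i - 1) + v ! i] @ take (length v - 1 - i) (drop i v)"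

section \<open>Dyck paths (True = U, False = D)\<close>

definition dyck :: "nat \<Rightarrow> bool list \<Rightarrow> bool" where
  "dyck N G \<longleftrightarrow> length G = 2 * N \<and> length (filter id G) = N \<and>
     (\<forall>k\<le>length G. length (filter Not (take k G)) \<le> length (filter id (take k G)))"

definition ups_before_D :: "bool list \<Rightarrow> nat \<Rightarrow> nat" where
  "ups_before_D G i = card {k. k < length G \<and> G ! k \<and> length (filter Not (take k G)) < i}"

definition dyck_vec :: "nat \<Rightarrow> bool list \<Rightarrow> int list" where
  "dyck_vec n G = map (\<lambda>j. int (ups_before_D G j) - int (j - 1)) [1..<n + 1]"

definition defines_dyck :: "nat \<Rightarrow> int list \<Rightarrow> bool" where
  "defines_dyck n w \<longleftrightarrow> (\<exists>G. dyck (n + 1) G \<and> w = dyck_vec n G)"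

section \<open>The operators T_i (partial: None if the process does not stop)\<close>

definition T_op :: "int list \<Rightarrow> nat \<Rightarrow> int option" where
  "T_op u i = map_option (\<lambda>(r, t). r + int t)
     (while_option (\<lambda>(r, t). \<exists>l\<in>{1..i}. r - u ! (l - 1) > 0)
        (\<lambda>(r, t). (r - u ! ((GREATEST l. l \<in> {1..i} \<and> r - u ! (l - 1) > 0) - 1), Suc t))
        (u ! (i - 1), 0::nat))"

definition T_vec :: "int list \<Rightarrow> int list option" where
  "T_vec u = (if \<forall>i\<in>{1..length u}. T_op u i \<noteq> None
              then Some (map (\<lambda>i. the (T_op u i)) [1..<length u + 1]) else None)"

end

theory Submission
  imports Defs
begin


fun ubd :: "bool list \<Rightarrow> nat \<Rightarrow> nat" where
  "ubd [] j = 0"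
| "ubd (True # G) j = (if j > 0 then 1 else 0) + ubd G j"
| "ubd (False # G) j = (if j = 0 then 0 else ubd G (j - 1))"

lemma set_cons_split:
  "{k. k < Suc m \<and> P k} = (if P 0 then insert 0 else id) (Suc ` {k. k < m \<and> P (Suc k)})"
  apply (auto simp: image_iff)
  using less_Suc_eq_0_disj by auto

lemma card_cons_split:
  "card {k. k < Suc m \<and> P k} = (if P 0 then 1 else 0) + card {k. k < m \<and> P (Suc k)}"
  apply (subst set_cons_split)
  apply (auto simp: card_image)
  done

lemma ups_ubd: "ups_before_D G j = ubd G j"
proof (induction G arbitrary: j)
  case Nil
  then show ?case by (simp add: ups_before_D_def)
next
  case (Cons a G)
  show ?case
  proof (cases a)
    case True
    have "ups_before_D (a # G) j = (if 0 < j then 1 else 0) + ups_before_D G j"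
      unfolding ups_before_D_def using True
      by (simp only: length_Cons card_cons_split) simp
    then show ?thesis using Cons True by simp
  next
    case False
    have "ups_before_D (a # G) j = (if j = 0 then 0 else ups_before_D G (j - 1))"
      unfolding ups_before_D_def using False
      apply (simp only: length_Cons card_cons_split)
      apply (cases j) apply simp_all
      done
    then show ?thesis using Cons False by simp
  qed
qed

lemma ubd_zero[simp]: "ubd G 0 = 0"
  by (induction G) (auto split: if_splits, case_tac a, auto)

lemma ubd_mono: "j \<le> j' \<Longrightarrow> ubd G j \<le> ubd G j'"
proof (induction G arbitrary: j j')
  case Nil then show ?case by simp
next
  case (Cons a G) then show ?case by (cases a) (auto simp: diff_le_mono)
qed

lemma ubd_lower:
  "(\<forall>k \<le> length G. int (length (filter Not (take k G))) \<le> int (length (filter id (take k G))) + c)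
   \<Longrightarrow> j \<le> length (filter Not G) \<Longrightarrow> int j \<le> int (ubd G j) + c"
proof (induction G arbitrary: j c)
  case Nil then show ?case by simp
next
  case (Cons a G)
  show ?case
  proof (cases a)
    case True
    have h: "\<forall>k \<le> length G. int (length (filter Not (take k G))) \<le> int (length (filter id (take k G))) + (c + 1)"
    proof (intro allI impI)
      fix k assume "k \<le> length G"
      then have "Suc k \<le> length (a # G)" by simp
      then have "int (length (filter Not (take (Suc k) (a # G)))) \<le> int (length (filter id (take (Suc k) (a # G)))) + c"
        using Cons.prems(1) by blast
      then show "int (length (filter Not (take k G))) \<le> int (length (filter id (take k G))) + (c + 1)"
        using True by simp
    qed
    have "int j \<le> int (ubd G j) + (c + 1)" using Cons.IH[OF h] Cons.prems(2) True by simp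
    have "0 \<le> c" using Cons.prems(1)[rule_format, of 0] by simp
    then show ?thesis using True \<open>int j \<le> int (ubd G j) + (c + 1)\<close> by (cases j) auto
  next
    case False
    have c1: "1 \<le> c" using Cons.prems(1)[rule_format, of 1] False by simp
    have h: "\<forall>k \<le> length G. int (length (filter Not (take k G))) \<le> int (length (filter id (take k G))) + (c - 1)"
    proof (intro allI impI)
      fix k assume "k \<le> length G"
      then have "Suc k \<le> length (a # G)" by simp
      then have "int (length (filter Not (take (Suc k) (a # G)))) \<le> int (length (filter id (take (Suc k) (a # G)))) + c"
        using Cons.prems(1) by blast
      then show "int (length (filter Not (take k G))) \<le> int (length (filter id (take k G))) + (c - 1)"
        using False by simp
    qed
    show ?thesis
    proof (cases j)
      case 0 then show ?thesis using c1 by simp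
    next
      case (Suc j')
      have "int j' \<le> int (ubd G j') + (c - 1)" using Cons.IH[OF h, of j'] Cons.prems(2) False Suc by simp
      then show ?thesis using False Suc by simp
    qed
  qed
qed

lemma dyck_lower:
  assumes "dyck N G" "1 \<le> j" "j \<le> N"
  shows "j \<le> ubd G j"
proof -
  have l: "length (filter Not G) = N"
    using assms(1) sum_length_filter_compl[of id G] unfolding dyck_def by simp
  have "int j \<le> int (ubd G j) + 0"
    apply (rule ubd_lower)
    using assms(1) l assms(3) unfolding dyck_def by auto
  then show ?thesis by simp
qed

fun bld :: "nat list \<Rightarrow> bool list" where
  "bld [] = []"
| "bld (g # gs) = replicate g True @ False # bld gs"

lemma ubd_rep: "ubd (replicate g True @ G) j = (if j > 0 then g else 0) + ubd G j"
  by (induction g) auto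

lemma ubd_bld: "ubd (bld gs) j = sum_list (take j gs)"
  by (induction gs arbitrary: j) (auto simp: ubd_rep take_Cons split: nat.splits)

lemma len_bld: "length (bld gs) = sum_list gs + length gs"
  by (induction gs) auto

lemma ups_bld: "length (filter id (bld gs)) = sum_list gs"
  by (induction gs) auto

lemma take_rep: "take k (replicate g True @ False # R) =
   (if k \<le> g then replicate k True else replicate g True @ False # take (k - g - 1) R)"
proof (cases "k \<le> g")
  case True then show ?thesis by simp
next
  case False
  then have "k = g + Suc (k - g - 1)" by simp
  then obtain k' where "k = g + Suc k'" by blast
  then show ?thesis by simp
qed

lemma bld_prefix:
  "(\<forall>j \<le> length gs. int j \<le> int (sum_list (take j gs)) + c) \<Longrightarrow>
   (\<forall>k. int (length (filter Not (take k (bld gs)))) \<le> int (length (filter id (take k (bld gs)))) + c)"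
proof (induction gs arbitrary: c)
  case Nil
  then show ?case by simp
next
  case (Cons g gs)
  have c0: "0 \<le> c" using Cons.prems[rule_format, of 0] by simp
  have c1: "1 \<le> int g + c" using Cons.prems[rule_format, of 1] by simp
  have h: "\<forall>j \<le> length gs. int j \<le> int (sum_list (take j gs)) + (int g + c - 1)"
  proof (intro allI impI)
    fix j assume "j \<le> length gs"
    then have "int (Suc j) \<le> int (sum_list (take (Suc j) (g # gs))) + c" using Cons.prems[rule_format, of "Suc j"] by simp
    then show "int j \<le> int (sum_list (take j gs)) + (int g + c - 1)" by simp
  qed
  show ?case
  proof
    fix k
    show "int (length (filter Not (take k (bld (g # gs))))) \<le> int (length (filter id (take k (bld (g # gs))))) + c"
    proof (cases "k \<le> g")
      case True
      then show ?thesis using c0 by (simp add: take_rep)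
    next
      case False
      have "int (length (filter Not (take (k - g - 1) (bld gs)))) \<le> int (length (filter id (take (k - g - 1) (bld gs)))) + (int g + c - 1)"
        using Cons.IH[OF h] by blast
      have "k = g + Suc (k - g - 1)" using False by simp
      then obtain k' where kk: "k = g + Suc k'" by blast
      have "int (length (filter Not (take k' (bld gs)))) \<le> int (length (filter id (take k' (bld gs)))) + (int g + c - 1)"
        using Cons.IH[OF h] by blast
      then show ?thesis unfolding kk by simp
    qed
  qed
qed

lemma build_dyck:
  fixes M :: "nat \<Rightarrow> nat"
  assumes mono: "\<And>j. 1 \<le> j \<Longrightarrow> j < N \<Longrightarrow> M j \<le> M (Suc j)"
    and low: "\<And>j. 1 \<le> j \<Longrightarrow> j \<le> N \<Longrightarrow> j \<le> M j"
    and top: "M N = N"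
  shows "\<exists>G. dyck N G \<and> (\<forall>j. 1 \<le> j \<longrightarrow> j \<le> N \<longrightarrow> ubd G j = M j)"
proof -
  define M' where "M' j = (if j = 0 then 0 else M j)" for j
  define gs where "gs = map (\<lambda>j. M' (Suc j) - M' j) [0..<N]"
  have mono': "M' j \<le> M' (Suc j)" if "j < N" for j
    using mono[of j] that unfolding M'_def by auto
  have tel: "sum_list (take j gs) = M' j" if "j \<le> N" for j
    using that
  proof (induction j)
    case 0 then show ?case by (simp add: M'_def)
  next
    case (Suc j)
    have "take (Suc j) gs = take j gs @ [M' (Suc j) - M' j]"
      unfolding gs_def using Suc.prems by (simp add: take_Suc_conv_app_nth)
    then show ?case using Suc mono'[of j] by simp
  qed
  have lgs: "length gs = N" by (simp add: gs_def)
  have sgs: "sum_list gs = N" using tel[of N] lgs top by (simp add: M'_def split: if_splits)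
  have "dyck N (bld gs)"
    unfolding dyck_def
  proof (intro conjI allI impI)
    show "length (bld gs) = 2 * N" by (simp add: len_bld lgs sgs)
    show "length (filter id (bld gs)) = N" by (simp add: ups_bld sgs)
    fix k
    have "\<forall>j \<le> length gs. int j \<le> int (sum_list (take j gs)) + 0"
      using tel low lgs by (auto simp: M'_def)
    from bld_prefix[OF this] show "length (filter Not (take k (bld gs))) \<le> length (filter id (take k (bld gs)))"
      by simp
  qed
  moreover have "\<forall>j. 1 \<le> j \<longrightarrow> j \<le> N \<longrightarrow> ubd (bld gs) j = M j"
    using tel by (auto simp: ubd_bld M'_def)
  ultimately show ?thesis by blast
qed



definition cnd :: "int list \<Rightarrow> nat \<Rightarrow> int \<times> nat \<Rightarrow> bool" where
  "cnd x i = (\<lambda>(r, t). \<exists>l\<in>{1..i}. r - x ! (l - 1) > 0)"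
definition stp :: "int list \<Rightarrow> nat \<Rightarrow> int \<times> nat \<Rightarrow> int \<times> nat" where
  "stp x i = (\<lambda>(r, t). (r - x ! ((GREATEST l. l \<in> {1..i} \<and> r - x ! (l - 1) > 0) - 1), Suc t))"

lemma cnd_eq: "cnd x i (r, t) = (\<exists>l. l \<in> {1..i} \<and> r - x ! (l - 1) > 0)"
  by (auto simp: cnd_def)

lemma T_op_alt: "T_op x i = map_option (\<lambda>(r, t). r + int t) (while_option (cnd x i) (stp x i) (x ! (i - 1), 0))"
  unfolding T_op_def cnd_def stp_def by (rule refl)

lemma stp_eq: "stp x i (r, t) = (r - x ! ((GREATEST l. l \<in> {1..i} \<and> r - x ! (l - 1) > 0) - 1), Suc t)"
  by (simp add: stp_def)

lemma grt_prop:
  assumes "l0 \<in> {1..i}" "r - x ! (l0 - 1) > 0"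
  shows "(GREATEST l. l \<in> {1..i} \<and> r - x ! (l - 1) > 0) \<in> {1..i} \<and>
         r - x ! ((GREATEST l. l \<in> {1..i} \<and> r - x ! (l - 1) > 0) - 1) > 0"
proof -
  have "\<And>y. y \<in> {1..i} \<and> r - x ! (y - 1) > 0 \<Longrightarrow> y \<le> i" by simp
  then show ?thesis using GreatestI_nat[of "\<lambda>l. l \<in> {1..i} \<and> r - x ! (l - 1) > 0" l0 i] assms by blast
qed

lemma T_prefix:
  assumes "1 \<le> i" "\<And>k. k < i \<Longrightarrow> x ! k = y ! k"
  shows "T_op x i = T_op y i"
proof -
  have p: "(l \<in> {1..i} \<and> r - x ! (l - 1) > 0) = (l \<in> {1..i} \<and> r - y ! (l - 1) > 0)" for r l
  proof (cases "l \<in> {1..i}")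
    case True
    then have "l - 1 < i" by auto
    then show ?thesis using assms(2)[of "l - 1"] by simp
  qed auto
  have p': "(\<lambda>l. l \<in> {1..i} \<and> r - x ! (l - 1) > 0) = (\<lambda>l. l \<in> {1..i} \<and> r - y ! (l - 1) > 0)" for r
    by (rule ext) (rule p)
  have c: "cnd x i = cnd y i"
  proof (rule ext)
    fix s :: "int \<times> nat"
    obtain r t where s: "s = (r, t)" by (cases s)
    show "cnd x i s = cnd y i s" unfolding s cnd_eq p' ..
  qed
  have st: "stp x i s = stp y i s" if "cnd y i s" for s
  proof -
    obtain r t where s: "s = (r, t)" by (cases s)
    have "\<exists>l. l \<in> {1..i} \<and> r - y ! (l - 1) > 0" using that unfolding s cnd_eq .
    then obtain l0 where l0: "l0 \<in> {1..i}" "r - y ! (l0 - 1) > 0" by blast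
    define g where "g = (GREATEST l. l \<in> {1..i} \<and> r - y ! (l - 1) > 0)"
    have "g \<in> {1..i}" unfolding g_def using grt_prop[OF l0] by blast
    then have "g - 1 < i" by auto
    then have "x ! (g - 1) = y ! (g - 1)" using assms(2) by blast
    then show ?thesis unfolding s stp_eq p' g_def[symmetric] by simp
  qed
  have e: "x ! (i - 1) = y ! (i - 1)" using assms by simp
  have w: "while_option (cnd y i) (stp x i) (y ! (i - 1), 0) = while_option (cnd y i) (stp y i) (y ! (i - 1), 0)"
    by (rule while_option_cong) (rule st)
  show ?thesis unfolding T_op_alt c e w ..
qed

lemma T_stop:
  assumes "1 \<le> i" "\<And>k. k < i \<Longrightarrow> x ! k \<ge> x ! (i - 1)"
  shows "T_op x i = Some (x ! (i - 1))"
proof -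
  have "\<not> cnd x i (x ! (i - 1), 0)" unfolding cnd_eq
  proof
    assume "\<exists>l. l \<in> {1..i} \<and> x ! (i - 1) - x ! (l - 1) > 0"
    then obtain l where "l \<in> {1..i}" "x ! (i - 1) - x ! (l - 1) > 0" by blast
    moreover have "l - 1 < i" using \<open>l \<in> {1..i}\<close> by auto
    ultimately show False using assms(2)[of "l - 1"] by linarith
  qed
  then have nc: "cnd x i (x ! (i - 1), 0) = False" by simp
  have "while_option (cnd x i) (stp x i) (x ! (i - 1), 0) =
     (if cnd x i (x ! (i - 1), 0) then while_option (cnd x i) (stp x i) (stp x i (x ! (i - 1), 0)) else Some (x ! (i - 1), 0))"
    by (rule while_option_unfold)
  also have "\<dots> = Some (x ! (i - 1), 0)" unfolding nc if_False ..
  finally show ?thesis unfolding T_op_alt by simp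
qed

lemma greatest_map:
  fixes Pu Pv :: "nat \<Rightarrow> bool" and \<phi> :: "nat \<Rightarrow> nat"
  assumes a: "\<And>l. Pu l \<Longrightarrow> Pv (\<phi> l)"
    and b: "\<And>l'. Pv l' \<Longrightarrow> \<exists>l. Pu l \<and> l' \<le> \<phi> l"
    and m: "\<And>x y. x \<le> y \<Longrightarrow> \<phi> x \<le> \<phi> y"
    and bd: "\<And>l. Pu l \<Longrightarrow> l \<le> bnd"
    and e: "Pu lz"
  shows "(GREATEST l. Pv l) = \<phi> (GREATEST l. Pu l)"
proof (rule Greatest_equality)
  have "Pu (GREATEST l. Pu l)" using GreatestI_nat[of Pu lz bnd] e bd by simp
  then show "Pv (\<phi> (GREATEST l. Pu l))" using a by simp
  fix y assume "Pv y"
  then obtain l where "Pu l" "y \<le> \<phi> l" using b by blast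
  moreover have "l \<le> (GREATEST l. Pu l)" using Greatest_le_nat[of Pu l bnd] bd \<open>Pu l\<close> by simp
  ultimately show "y \<le> \<phi> (GREATEST l. Pu l)" using m[of l "GREATEST l. Pu l"] by linarith
qed

lemma vp_len: "length u = n \<Longrightarrow> 1 \<le> i \<Longrightarrow> i < n \<Longrightarrow> length (vec_plus u i) = n"
  unfolding vec_plus_def by simp

lemma vp_nth:
  assumes "length u = n" "1 \<le> i" "i < n" "k < n"
  shows "vec_plus u i ! k = (if k < i then u ! k else if k = i then u ! (i - 1) + u ! i else u ! (k - 1))"
proof -
  have e: "vec_plus u i = take i u @ (u ! (i - 1) + u ! i) # take (length u - 1 - i) (drop i u)"
    unfolding vec_plus_def by simp
  have lt: "length (take i u) = i" using assms by simp
  consider "k < i" | "k = i" | "i < k" by linarith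
  then show ?thesis
  proof cases
    case 1 then show ?thesis unfolding e nth_append lt by simp
  next
    case 2 then show ?thesis unfolding e nth_append lt by simp
  next
    case 3
    then have "(take i u @ (u ! (i - 1) + u ! i) # take (length u - 1 - i) (drop i u)) ! k
       = take (length u - 1 - i) (drop i u) ! (k - i - 1)"
      unfolding nth_append lt by (simp add: nth_Cons')
    also have "\<dots> = u ! (k - 1)" using 3 assms by simp
    finally show ?thesis unfolding e using 3 by simp
  qed
qed

lemma T_shift:
  assumes len: "length u = n" and i1: "1 \<le> i" and i2: "i < n" and j1: "i + 2 \<le> j" and j2: "j \<le> n"
    and pos: "\<And>k. k < n \<Longrightarrow> u ! k \<ge> 1"
  shows "T_op (vec_plus u i) j = T_op u (j - 1)"
proof -
  define v where "v = vec_plus u i"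
  have vn: "\<And>k. k < n \<Longrightarrow> v ! k = (if k < i then u ! k else if k = i then u ! (i - 1) + u ! i else u ! (k - 1))"
    unfolding v_def using vp_nth[OF len i1 i2] by blast
  define \<phi> :: "nat \<Rightarrow> nat" where "\<phi> l = (if l \<le> i then l else Suc l)" for l
  define Pu where "Pu r l = (l \<in> {1..j - 1} \<and> r - u ! (l - 1) > 0)" for r l
  define Pv where "Pv r l = (l \<in> {1..j} \<and> r - v ! (l - 1) > 0)" for r l
  have idx: "v ! (\<phi> l - 1) = u ! (l - 1)" if "l \<in> {1..j - 1}" for l
    using that vn[of "\<phi> l - 1"] j2 unfolding \<phi>_def by auto
  have a: "Pv r (\<phi> l)" if "Pu r l" for r l
    using that idx[of l] j1 unfolding Pu_def Pv_def \<phi>_def by auto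
  have b: "\<exists>l. Pu r l \<and> l' \<le> \<phi> l" if "Pv r l'" "r \<le> u ! (j - 2)" for r l'
  proof -
    have l'1: "1 \<le> l'" "l' \<le> j" and l'2: "r - v ! (l' - 1) > 0" using that unfolding Pv_def by auto
    consider "l' \<le> i" | "l' = Suc i" | "Suc i < l'" by linarith
    then show ?thesis
    proof cases
      case 1
      have "l' - 1 < i" using 1 l'1 by linarith
      then have "v ! (l' - 1) = u ! (l' - 1)" using vn[of "l' - 1"] i2 by simp
      then have "Pu r l'" using 1 l'1 l'2 i2 j1 unfolding Pu_def by auto
      then show ?thesis using 1 unfolding \<phi>_def by (intro exI[of _ "l'"]) auto
    next
      case 2
      then have vv: "v ! (l' - 1) = u ! (i - 1) + u ! i" using vn[of i] i2 by simp
      have "j \<noteq> i + 2"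
      proof
        assume "j = i + 2"
        then have "u ! (j - 2) = u ! i" by simp
        then show False using l'2 vv that(2) pos[of "i - 1"] i2 by linarith
      qed
      have p1: "1 \<le> u ! (i - 1)" using pos[of "i - 1"] i2 by simp
      have "u ! i < r" using p1 l'2 vv by linarith
      then have "Pu r (Suc i)" using j1 \<open>j \<noteq> i + 2\<close> unfolding Pu_def by auto
      then show ?thesis using 2 unfolding \<phi>_def by (intro exI[of _ "Suc i"]) auto
    next
      case 3
      have "\<not> l' - 1 < i" "l' - 1 \<noteq> i" "l' - 1 < n" using 3 l'1 j2 by auto
      then have "v ! (l' - 1) = u ! (l' - 1 - 1)" using vn[of "l' - 1"] by simp
      then have "Pu r (l' - 1)" using 3 l'1 l'2 unfolding Pu_def by auto
      then show ?thesis using 3 unfolding \<phi>_def by (intro exI[of _ "l' - 1"]) auto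
    qed
  qed
  have bnd: "\<And>r l. Pu r l \<Longrightarrow> l \<le> j - 1" unfolding Pu_def by auto
  have cu: "cnd u (j - 1) (r, t) = (\<exists>l. Pu r l)" for r t unfolding cnd_eq Pu_def by simp
  have cv: "cnd v j (r, t) = (\<exists>l. Pv r l)" for r t unfolding cnd_eq Pv_def by simp
  have su: "stp u (j - 1) (r, t) = (r - u ! ((GREATEST l. Pu r l) - 1), Suc t)" for r t
    unfolding stp_eq Pu_def by simp
  have sv: "stp v j (r, t) = (r - v ! ((GREATEST l. Pv r l) - 1), Suc t)" for r t
    unfolding stp_eq Pv_def by simp
  have gprop: "Pu r (GREATEST l. Pu r l)" if "Pu r l0" for r l0
    using GreatestI_nat[of "Pu r" l0 "j - 1"] that bnd by blast
  have m: "\<And>x y. x \<le> y \<Longrightarrow> \<phi> x \<le> \<phi> y" unfolding \<phi>_def by auto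
  have "map_option id (while_option (cnd u (j - 1)) (stp u (j - 1)) (u ! (j - 1 - 1), 0)) =
        while_option (cnd v j) (stp v j) (id (u ! (j - 1 - 1), 0))"
  proof (rule while_option_commute_invariant[where P = "\<lambda>(r, t). r \<le> u ! (j - 2)"])
    fix s :: "int \<times> nat"
    obtain r t where s: "s = (r, t)" by (cases s)
    {
      assume P: "case s of (r, t) \<Rightarrow> r \<le> u ! (j - 2)"
      then have rr: "r \<le> u ! (j - 2)" using s by simp
      have "(\<exists>l. Pu r l) = (\<exists>l. Pv r l)"
      proof
        assume "\<exists>l. Pu r l" then obtain l where "Pu r l" by blast
        then show "\<exists>l. Pv r l" using a by blast
      next
        assume "\<exists>l. Pv r l" then obtain l where "Pv r l" by blast
        then show "\<exists>l. Pu r l" using b[OF _ rr] by blast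
      qed
      then show "cnd u (j - 1) s = cnd v j (id s)"
        unfolding s id_apply cu cv .
      assume B: "cnd u (j - 1) s"
      then obtain l0 where l0: "Pu r l0" unfolding s cu by blast
      have g: "Pu r (GREATEST l. Pu r l)" using gprop[OF l0] .
      have "(GREATEST l. Pv r l) = \<phi> (GREATEST l. Pu r l)"
      proof (rule greatest_map[where bnd = "j - 1" and lz = l0])
        show "\<And>l. Pu r l \<Longrightarrow> Pv r (\<phi> l)" by (rule a)
        show "\<And>l'. Pv r l' \<Longrightarrow> \<exists>l. Pu r l \<and> l' \<le> \<phi> l" by (rule b[OF _ rr])
        show "\<And>x y. x \<le> y \<Longrightarrow> \<phi> x \<le> \<phi> y" by (rule m)
        show "\<And>l. Pu r l \<Longrightarrow> l \<le> j - 1" by (rule bnd)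
        show "Pu r l0" by (rule l0)
      qed
      moreover have "v ! (\<phi> (GREATEST l. Pu r l) - 1) = u ! ((GREATEST l. Pu r l) - 1)"
        using idx g unfolding Pu_def by blast
      ultimately show "id (stp u (j - 1) s) = stp v j (id s)" unfolding s id_apply su sv by simp
      have gin: "(GREATEST l. Pu r l) \<in> {1..j - 1}" using g unfolding Pu_def by blast
      have "(GREATEST l. Pu r l) - 1 < n"
      proof -
        define gg where "gg = (GREATEST l. Pu r l)"
        have "gg \<in> {1..j - 1}" using gin unfolding gg_def .
        then have "gg - 1 < n" using j2 by auto
        then show ?thesis unfolding gg_def .
      qed
      then have "u ! ((GREATEST l. Pu r l) - 1) \<ge> 1" using pos by blast
      then show "case stp u (j - 1) s of (r, t) \<Rightarrow> r \<le> u ! (j - 2)"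
        unfolding s su using rr by simp
    }
  next
    show "case (u ! (j - 1 - 1), 0) of (r, t) \<Rightarrow> r \<le> u ! (j - 2)" by (simp add: numeral_2_eq_2)
  qed
  moreover have "v ! (j - 1) = u ! (j - 1 - 1)"
  proof -
    have "\<not> j - 1 < i" "j - 1 \<noteq> i" "j - 1 < n" using j1 j2 by auto
    then show ?thesis using vn[of "j - 1"] by simp
  qed
  ultimately show ?thesis unfolding T_op_alt v_def[symmetric] by (simp add: option.map_id)
qed



lemma T_plus1:
  assumes len: "length u = n" and i1: "1 \<le> i" and i2: "i < n"
    and pos: "\<And>k. k < n \<Longrightarrow> u ! k \<ge> 1"
  shows "T_op (vec_plus u i) (Suc i) = map_option (\<lambda>z. z + 1) (T_op u (Suc i))"
proof -
  define v where "v = vec_plus u i"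
  have vn: "\<And>k. k < n \<Longrightarrow> v ! k = (if k < i then u ! k else if k = i then u ! (i - 1) + u ! i else u ! (k - 1))"
    unfolding v_def using vp_nth[OF len i1 i2] by blast
  have vi: "v ! i = u ! (i - 1) + u ! i" using vn[of i] i2 by simp
  have vlow: "v ! k = u ! k" if "k < i" for k using vn[of k] that i2 by simp
  have vim1: "v ! (i - 1) = u ! (i - 1)" using vlow[of "i - 1"] i1 by simp
  have p0: "1 \<le> u ! (i - 1)" using pos[of "i - 1"] i2 by simp
  have p1: "1 \<le> u ! i" using pos[of i] i2 by simp
  define Pu where "Pu r l = (l \<in> {1..Suc i} \<and> r - u ! (l - 1) > 0)" for r l
  define Pv where "Pv r l = (l \<in> {1..Suc i} \<and> r - v ! (l - 1) > 0)" for r l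
  have PP: "Pu r = Pv r" if "r \<le> u ! i" for r
  proof (rule ext)
    fix l
    show "Pu r l = Pv r l"
    proof (cases "l = Suc i")
      case True
      then show ?thesis unfolding Pu_def Pv_def using that vi p0 by simp
    next
      case False
      show ?thesis
      proof (cases "l \<in> {1..Suc i}")
        case True
        then have "l - 1 < i" using False by auto
        then show ?thesis unfolding Pu_def Pv_def using vlow[of "l - 1"] by simp
      next
        case False
        then show ?thesis unfolding Pu_def Pv_def by auto
      qed
    qed
  qed
  have cu: "cnd u (Suc i) (r, t) = (\<exists>l. Pu r l)" for r t unfolding cnd_eq Pu_def by simp
  have cv: "cnd v (Suc i) (r, t) = (\<exists>l. Pv r l)" for r t unfolding cnd_eq Pv_def by simp
  have su: "stp u (Suc i) (r, t) = (r - u ! ((GREATEST l. Pu r l) - 1), Suc t)" for r t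
    unfolding stp_eq Pu_def by simp
  have sv: "stp v (Suc i) (r, t) = (r - v ! ((GREATEST l. Pv r l) - 1), Suc t)" for r t
    unfolding stp_eq Pv_def by simp
  have bnd: "\<And>r l. Pu r l \<Longrightarrow> l \<le> Suc i" unfolding Pu_def by auto
  have gprop: "Pu r (GREATEST l. Pu r l)" if "Pu r l0" for r l0
    using GreatestI_nat[of "Pu r" l0 "Suc i"] that bnd by blast
  have pvi: "Pv (v ! i) i" unfolding Pv_def using i1 vi vim1 p1 by simp
  have g0: "(GREATEST l. Pv (v ! i) l) = i"
  proof (rule Greatest_equality)
    show "Pv (v ! i) i" by (rule pvi)
    fix y assume "Pv (v ! i) y"
    then show "y \<le> i" unfolding Pv_def by (cases "y = Suc i") auto
  qed
  have c0: "cnd v (Suc i) (v ! i, 0)" unfolding cv using pvi by blast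
  have s0: "stp v (Suc i) (v ! i, 0) = (u ! i, 1)" unfolding sv g0 using vi vim1 by simp
  have w1: "while_option (cnd v (Suc i)) (stp v (Suc i)) (v ! i, 0) =
            while_option (cnd v (Suc i)) (stp v (Suc i)) (u ! i, 1)"
  proof -
    have "while_option (cnd v (Suc i)) (stp v (Suc i)) (v ! i, 0) =
     (if cnd v (Suc i) (v ! i, 0) then while_option (cnd v (Suc i)) (stp v (Suc i)) (stp v (Suc i) (v ! i, 0)) else Some (v ! i, 0))"
      by (rule while_option_unfold)
    also have "\<dots> = while_option (cnd v (Suc i)) (stp v (Suc i)) (u ! i, 1)"
      unfolding s0 using c0 by (simp only: if_True)
    finally show ?thesis .
  qed
  define f :: "int \<times> nat \<Rightarrow> int \<times> nat" where "f = (\<lambda>(r, t). (r, Suc t))"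
  have comm: "map_option f (while_option (cnd u (Suc i)) (stp u (Suc i)) (u ! i, 0)) =
        while_option (cnd v (Suc i)) (stp v (Suc i)) (f (u ! i, 0))"
  proof (rule while_option_commute_invariant[where P = "\<lambda>(r, t). r \<le> u ! i"])
    fix s :: "int \<times> nat"
    obtain r t where s: "s = (r, t)" by (cases s)
    {
      assume P: "case s of (r, t) \<Rightarrow> r \<le> u ! i"
      then have rr: "r \<le> u ! i" using s by simp
      have fs: "f (r, t) = (r, Suc t)" by (simp add: f_def)
      show "cnd u (Suc i) s = cnd v (Suc i) (f s)"
        unfolding s fs cu cv PP[OF rr] ..
      assume B: "cnd u (Suc i) s"
      then obtain l0 where l0: "Pu r l0" unfolding s cu by blast
      have g: "Pu r (GREATEST l. Pu r l)" using gprop[OF l0] .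
      have gi: "(GREATEST l. Pu r l) - 1 < i"
      proof -
        define gg where "gg = (GREATEST l. Pu r l)"
        have "Pu r gg" using g unfolding gg_def .
        then have "gg \<in> {1..Suc i}" "gg \<noteq> Suc i" unfolding Pu_def using rr by auto
        then have "gg - 1 < i" by auto
        then show ?thesis unfolding gg_def .
      qed
      have "v ! ((GREATEST l. Pu r l) - 1) = u ! ((GREATEST l. Pu r l) - 1)" using vlow gi by blast
      then show "f (stp u (Suc i) s) = stp v (Suc i) (f s)" unfolding s fs su sv PP[OF rr]
        by (simp add: f_def)
      have "(GREATEST l. Pu r l) - 1 < n" using gi i2 by linarith
      then have "u ! ((GREATEST l. Pu r l) - 1) \<ge> 1" using pos by blast
      then show "case stp u (Suc i) s of (r, t) \<Rightarrow> r \<le> u ! i"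
        unfolding s su using rr by simp
    }
  next
    show "case (u ! i, 0) of (r, t) \<Rightarrow> r \<le> u ! i" by simp
  qed
  have "T_op v (Suc i) = map_option (\<lambda>(r, t). r + int t) (while_option (cnd v (Suc i)) (stp v (Suc i)) (u ! i, 1))"
    unfolding T_op_alt w1[symmetric] by simp
  also have "\<dots> = map_option (\<lambda>(r, t). r + int t) (map_option f (while_option (cnd u (Suc i)) (stp u (Suc i)) (u ! i, 0)))"
    unfolding comm by (simp add: f_def)
  also have "\<dots> = map_option (\<lambda>z. z + 1) (T_op u (Suc i))"
    unfolding T_op_alt by (simp add: option.map_comp f_def comp_def case_prod_beta ac_simps)
  finally show ?thesis unfolding v_def .
qed

lemma pos_from_T:
  assumes "\<And>j. 1 \<le> j \<Longrightarrow> j \<le> n \<Longrightarrow> \<exists>z. T_op u j = Some z \<and> z \<ge> 1"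
  shows "k < n \<Longrightarrow> u ! k \<ge> 1"
proof (induction k rule: less_induct)
  case (less k)
  show ?case
  proof (rule ccontr)
    assume "\<not> 1 \<le> u ! k"
    then have "T_op u (Suc k) = Some (u ! (Suc k - 1))"
    proof (intro T_stop)
      fix k' assume k': "k' < Suc k"
      show "u ! (Suc k - 1) \<le> u ! k'"
      proof (cases "k' = k")
        case False
        then have "k' < k" using k' by simp
        then have "1 \<le> u ! k'" using less.IH less.prems by simp
        then show ?thesis using \<open>\<not> 1 \<le> u ! k\<close> by simp
      qed simp
    qed simp
    then have "T_op u (Suc k) = Some (u ! k)" by simp
    then show False using assms[of "Suc k"] less.prems \<open>\<not> 1 \<le> u ! k\<close> by auto
  qed
qed


lemma mapidx:
  assumes "1 \<le> j" "j \<le> n"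
  shows "map f [1..<n + 1] ! (j - 1) = f j"
proof -
  have "j - 1 < length [1..<n + 1]" using assms by simp
  then have "map f [1..<n + 1] ! (j - 1) = f ([1..<n + 1] ! (j - 1))" by (rule nth_map)
  moreover have "[1..<n + 1] ! (j - 1) = 1 + (j - 1)" using nth_upt[of 1 "j - 1" "n + 1"] assms by simp
  ultimately show ?thesis using assms by simp
qed

theorem proposition14:
  fixes n :: nat and a1 a2 :: "nat \<Rightarrow> int"
  assumes "n \<ge> 2"
    and "pos_int_diamond n a1 a2"
    and "a1 n = 1"
    and "\<exists>w. T_vec (diamond_vec n a1) = Some w \<and> defines_dyck n w"
  shows "\<forall>i. 1 \<le> i \<and> i < n \<longrightarrow>
           (\<exists>w. T_vec (vec_plus (diamond_vec n a1) i) = Some w \<and> defines_dyck n w)"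
proof (intro allI impI)
  fix i assume "1 \<le> i \<and> i < n"
  then have i1: "1 \<le> i" and i2: "i < n" by auto
  define u where "u = diamond_vec n a1"
  have lenu: "length u = n" by (simp del: upt_Suc add: u_def diamond_vec_def)
  have un: "u ! (n - 1) = 1"
  proof -
    have "u ! (n - 1) = a1 (1 + (n - 1))" unfolding u_def diamond_vec_def using assms(1) by (simp del: upt_Suc add: nth_map_upt nth_upt)
    then show ?thesis using assms(1,3) by simp
  qed
  obtain w where Tw: "T_vec u = Some w" and dw: "defines_dyck n w" using assms(4) unfolding u_def by blast
  obtain G where dG: "dyck (n + 1) G" and wG: "w = dyck_vec n G" using dw unfolding defines_dyck_def by blast
  have allT: "\<forall>j\<in>{1..length u}. T_op u j \<noteq> None" and wdef: "w = map (\<lambda>j. the (T_op u j)) [1..<length u + 1]"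
    using Tw unfolding T_vec_def by (auto split: if_splits)
  have Tu: "T_op u j = Some (int (ubd G j) - int (j - 1))" if j: "1 \<le> j" "j \<le> n" for j
  proof -
    have "w ! (j - 1) = the (T_op u j)" unfolding wdef lenu using mapidx[of j n, OF j] .
    moreover have "w ! (j - 1) = int (ubd G j) - int (j - 1)" unfolding wG dyck_vec_def
      using mapidx[of j n, OF j] by (simp only: ups_ubd)
    moreover have "T_op u j \<noteq> None" using allT j lenu by auto
    ultimately show ?thesis by auto
  qed
  have low: "j \<le> ubd G j" if "1 \<le> j" "j \<le> n + 1" for j using dyck_lower[OF dG] that by blast
  have pos: "\<And>k. k < n \<Longrightarrow> u ! k \<ge> 1"
  proof (rule pos_from_T)
    fix j assume "1 \<le> j" "j \<le> n"
    then show "\<exists>z. T_op u j = Some z \<and> z \<ge> 1" using Tu low by fastforce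
  qed
  have "T_op u n = Some (u ! (n - 1))"
  proof (rule T_stop)
    show "1 \<le> n" using assms(1) by simp
    fix k assume "k < n" then show "u ! (n - 1) \<le> u ! k" using pos un by simp
  qed
  then have Gn: "ubd G n = n" using Tu[of n] un assms(1) by simp
  define v where "v = vec_plus u i"
  have lenv: "length v = n" unfolding v_def using vp_len[OF lenu i1 i2] .
  have vn: "\<And>k. k < n \<Longrightarrow> v ! k = (if k < i then u ! k else if k = i then u ! (i - 1) + u ! i else u ! (k - 1))"
    unfolding v_def using vp_nth[OF lenu i1 i2] by blast
  define W where "W j = (if j \<le> i then int (ubd G j) - int (j - 1)
     else if j = Suc i then int (ubd G (Suc i)) - int i + 1 else int (ubd G (j - 1)) - int (j - 2))" for j
  have Tv: "T_op v j = Some (W j)" if j: "1 \<le> j" "j \<le> n" for j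
  proof -
    consider "j \<le> i" | "j = Suc i" | "Suc i < j" by linarith
    then show ?thesis
    proof cases
      case 1
      have "T_op v j = T_op u j"
      proof (rule T_prefix)
        show "1 \<le> j" using j by simp
        fix k assume "k < j" then show "v ! k = u ! k" using vn[of k] 1 i2 by simp
      qed
      then show ?thesis using Tu[OF j] 1 unfolding W_def by simp
    next
      case 2
      have "T_op v j = map_option (\<lambda>z. z + 1) (T_op u (Suc i))"
        unfolding v_def 2 by (rule T_plus1[OF lenu i1 i2 pos])
      then show ?thesis using Tu[of "Suc i"] 2 j unfolding W_def by simp
    next
      case 3
      have "T_op v j = T_op u (j - 1)"
        unfolding v_def by (rule T_shift[OF lenu i1 i2 _ j(2) pos]) (use 3 in simp)
      moreover have "j - 1 - 1 = j - 2" by simp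
      ultimately show ?thesis using Tu[of "j - 1"] 3 j unfolding W_def by simp
    qed
  qed
  have Tvv: "T_vec v = Some (map W [1..<n + 1])"
    unfolding T_vec_def lenv using Tv by (auto intro!: map_cong)
  define M where "M j = (if j \<le> i then ubd G j else if j = Suc i then ubd G (Suc i) + 1
     else if j \<le> n then ubd G (j - 1) + 1 else n + 1)" for j
  have um: "\<And>a b. a \<le> b \<Longrightarrow> ubd G a \<le> ubd G b" by (rule ubd_mono)
  have Mmono: "M j \<le> M (Suc j)" if "1 \<le> j" "j < n + 1" for j
  proof -
    consider "j < i" | "j = i" | "j = Suc i" | "Suc i < j" by linarith
    then show ?thesis
    proof cases
      case 1 then show ?thesis unfolding M_def using um[of j "Suc j"] by simp
    next
      case 2 then show ?thesis unfolding M_def using um[of i "Suc i"] by simp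
    next
      case 3 then show ?thesis unfolding M_def using Gn i2 by (cases "Suc i = n") auto
    next
      case 4
      show ?thesis
      proof (cases "j = n")
        case True then show ?thesis unfolding M_def using 4 um[of "n - 1" n] Gn by simp
      next
        case False then show ?thesis unfolding M_def using 4 that um[of "j - 1" j] by simp
      qed
    qed
  qed
  have Mlow: "j \<le> M j" if "1 \<le> j" "j \<le> n + 1" for j
  proof -
    have "j \<le> i \<or> j = Suc i \<or> (Suc i < j \<and> j \<le> n) \<or> j = n + 1" using that by linarith
    then consider "j \<le> i" | "j = Suc i" | "Suc i < j \<and> j \<le> n" | "j = n + 1" by blast
    then show ?thesis
    proof cases
      case 1 then show ?thesis unfolding M_def using low[of j] that by simp
    next
      case 2 then show ?thesis unfolding M_def using low[of "Suc i"] i2 by simp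
    next
      case 3
      then have "j - 1 \<le> ubd G (j - 1)" by (intro low) (use i1 in auto)
      then show ?thesis unfolding M_def using 3 by simp
    next
      case 4 then show ?thesis unfolding M_def using i2 by simp
    qed
  qed
  have Mtop: "M (n + 1) = n + 1" unfolding M_def using i2 by simp
  obtain G' where dG': "dyck (n + 1) G'" and uG': "\<forall>j. 1 \<le> j \<longrightarrow> j \<le> n + 1 \<longrightarrow> ubd G' j = M j"
    using build_dyck[of "n + 1" M] Mmono Mlow Mtop by blast
  have "map W [1..<n + 1] = dyck_vec n G'"
  proof (rule nth_equalityI)
    show "length (map W [1..<n + 1]) = length (dyck_vec n G')" by (simp del: upt_Suc add: dyck_vec_def)
    fix k assume "k < length (map W [1..<n + 1])"
    then have k: "k < n" by (simp del: upt_Suc)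
    have k1: "1 \<le> Suc k" "Suc k \<le> n" using k by auto
    have "dyck_vec n G' ! k = int (ups_before_D G' (Suc k)) - int k"
      unfolding dyck_vec_def using mapidx[of "Suc k" n "\<lambda>j. int (ups_before_D G' j) - int (j - 1)", OF k1] by (simp del: upt_Suc)
    then have "dyck_vec n G' ! k = int (M (Suc k)) - int k"
      using k uG' by (simp add: ups_ubd)
    moreover have "W (Suc k) = int (M (Suc k)) - int k"
      unfolding W_def M_def using k by auto
    moreover have "map W [1..<n + 1] ! k = W (Suc k)" using mapidx[of "Suc k" n W, OF k1] by (simp del: upt_Suc)
    ultimately show "map W [1..<n + 1] ! k = dyck_vec n G' ! k" by simp
  qed
  then have "defines_dyck n (map W [1..<n + 1])" unfolding defines_dyck_def using dG' by blast
  then show "\<exists>w. T_vec (vec_plus (diamond_vec n a1) i) = Some w \<and> defines_dyck n w"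
    using Tvv unfolding v_def u_def by blast
qed

end
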